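(* For any finite abelian group $G$ and positive integer $n$, the monoid $I_n(\hat G)$ is left inductive and right inductive.
   Context: $\hat G=G\sqcup\{0\}$ with $0$ absorbing. $I_n(\hat G)$ is the monoid of $n\times n$ matrices with entries in $\hat G$ having at most one nonzero entry in each row and each column, under matrix multiplication; it is a $\hat G$-linear monoid with $G$ embedded as scalar matrices. $\mathrm{Vect}_{\hat G}$: objects are finite pointed sets with an action of $\hat G$ ($0v=0$, $g0=0$) such that $G$ acts freely on nonzero elements; morphisms $f$ satisfy $f(0)=0$, $f(gv)=gf(v)$, $f(v_1)=f(v_2)\neq0\Rightarrow Gv_1=Gv_2$. For a monoid $M$ with zero and $a\in M$: $J(a)=MaM$, $I(a)=\{x\in J(a):MxM\neq J(a)\}$, $P(a)=(J(a)\setminus I(a))\cup\{0\}$. $M$ acts on $P(a)$ by left translation ($m\cdot x=mx$ if $mx\in J(a)\setminus I(a)$, else $0$) and on the right by right translation analogously. $M$ is left (resp. right) inductive if for every idempotent $e\in M$, each left (resp. right) translation by an element of $M$ is a morphism of $\mathrm{Vect}_{\hat G}$ on $P(e)$ (so that $P(e)$ is a $\hat G$-linear representation of $M$, resp. of $M^{\mathrm{op}}$, with $0$ acting as zero and $G$ as scalars). *)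

theory Defs
  imports "HOL-Algebra.Group"
begin

definition J_ideal :: "'m set \<Rightarrow> ('m \<Rightarrow> 'm \<Rightarrow> 'm) \<Rightarrow> 'm \<Rightarrow> 'm set" where
  "J_ideal M mul a = {mul (mul x a) y | x y. x \<in> M \<and> y \<in> M}"

definition I_ideal :: "'m set \<Rightarrow> ('m \<Rightarrow> 'm \<Rightarrow> 'm) \<Rightarrow> 'm \<Rightarrow> 'm set" where
  "I_ideal M mul a = {x \<in> J_ideal M mul a. J_ideal M mul x \<noteq> J_ideal M mul a}"

definition P_set :: "'m set \<Rightarrow> ('m \<Rightarrow> 'm \<Rightarrow> 'm) \<Rightarrow> 'm \<Rightarrow> 'm \<Rightarrow> 'm set" where
  "P_set M mul z a = (J_ideal M mul a - I_ideal M mul a) \<union> {z}"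

definition lact :: "'m set \<Rightarrow> ('m \<Rightarrow> 'm \<Rightarrow> 'm) \<Rightarrow> 'm \<Rightarrow> 'm \<Rightarrow> 'm \<Rightarrow> 'm \<Rightarrow> 'm" where
  "lact M mul z a m x = (if mul m x \<in> J_ideal M mul a - I_ideal M mul a then mul m x else z)"

definition ract :: "'m set \<Rightarrow> ('m \<Rightarrow> 'm \<Rightarrow> 'm) \<Rightarrow> 'm \<Rightarrow> 'm \<Rightarrow> 'm \<Rightarrow> 'm \<Rightarrow> 'm" where
  "ract M mul z a m x = (if mul x m \<in> J_ideal M mul a - I_ideal M mul a then mul x m else z)"

text \<open>An object: a finite pointed set (X, z) with an action of G (the element 0 of \<hat>G acts
  as the constant map to z), fixing z, with G acting freely on nonzero elements.\<close>
definition vect_obj :: "('g, 'b) monoid_scheme \<Rightarrow> 'x set \<Rightarrow> 'x \<Rightarrow> ('g \<Rightarrow> 'x \<Rightarrow> 'x) \<Rightarrow> bool" where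
  "vect_obj G X z act \<longleftrightarrow>
     finite X \<and> z \<in> X \<and>
     (\<forall>g\<in>carrier G. \<forall>v\<in>X. act g v \<in> X) \<and>
     (\<forall>v\<in>X. act \<one>\<^bsub>G\<^esub> v = v) \<and>
     (\<forall>g\<in>carrier G. \<forall>h\<in>carrier G. \<forall>v\<in>X. act (g \<otimes>\<^bsub>G\<^esub> h) v = act g (act h v)) \<and>
     (\<forall>g\<in>carrier G. act g z = z) \<and>
     (\<forall>g\<in>carrier G. \<forall>v\<in>X - {z}. act g v = v \<longrightarrow> g = \<one>\<^bsub>G\<^esub>)"

definition vect_mor :: "('g, 'b) monoid_scheme \<Rightarrow> 'x set \<Rightarrow> 'x \<Rightarrow> ('g \<Rightarrow> 'x \<Rightarrow> 'x)
     \<Rightarrow> 'y set \<Rightarrow> 'y \<Rightarrow> ('g \<Rightarrow> 'y \<Rightarrow> 'y) \<Rightarrow> ('x \<Rightarrow> 'y) \<Rightarrow> bool" where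
  "vect_mor G X z act Y z' act' f \<longleftrightarrow>
     (\<forall>v\<in>X. f v \<in> Y) \<and> f z = z' \<and>
     (\<forall>g\<in>carrier G. \<forall>v\<in>X. f (act g v) = act' g (f v)) \<and>
     (\<forall>v1\<in>X. \<forall>v2\<in>X. f v1 = f v2 \<and> f v1 \<noteq> z' \<longrightarrow>
        {act g v1 | g. g \<in> carrier G} = {act g v2 | g. g \<in> carrier G})"

text \<open>Matrices indexed by 0..n-1; None is the zero of \<hat>G, Some g an element g of G.\<close>
type_synonym 'g gmat = "nat \<Rightarrow> nat \<Rightarrow> 'g option"

definition In_mats :: "('g, 'b) monoid_scheme \<Rightarrow> nat \<Rightarrow> 'g gmat set" where
  "In_mats G n = {A. (\<forall>i j. A i j \<noteq> None \<longrightarrow> i < n \<and> j < n \<and> the (A i j) \<in> carrier G) \<and>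
      (\<forall>i j k. A i j \<noteq> None \<longrightarrow> A i k \<noteq> None \<longrightarrow> j = k) \<and>
      (\<forall>i j k. A i j \<noteq> None \<longrightarrow> A k j \<noteq> None \<longrightarrow> i = k)}"

text \<open>Matrix product: (AB)_{ij} is the unique nonzero product A_{ik} B_{kj} if it exists, else 0.\<close>
definition mat_mul :: "('g, 'b) monoid_scheme \<Rightarrow> 'g gmat \<Rightarrow> 'g gmat \<Rightarrow> 'g gmat" where
  "mat_mul G A B = (\<lambda>i j.
     if \<exists>k. A i k \<noteq> None \<and> B k j \<noteq> None
     then (let k = (SOME k. A i k \<noteq> None \<and> B k j \<noteq> None)
           in Some (the (A i k) \<otimes>\<^bsub>G\<^esub> the (B k j)))
     else None)"

definition zero_mat :: "'g gmat" where
  "zero_mat = (\<lambda>i j. None)"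

definition scalar_mat :: "nat \<Rightarrow> 'g \<Rightarrow> 'g gmat" where
  "scalar_mat n g = (\<lambda>i j. if i < n \<and> i = j then Some g else None)"

definition left_inductive :: "('g, 'b) monoid_scheme \<Rightarrow> nat \<Rightarrow> bool" where
  "left_inductive G n \<longleftrightarrow>
    (\<forall>e\<in>In_mats G n. mat_mul G e e = e \<longrightarrow>
      (let M = In_mats G n; mul = mat_mul G; z = zero_mat;
           X = P_set M mul z e;
           act = (\<lambda>g v. lact M mul z e (scalar_mat n g) v)
       in vect_obj G X z act \<and>
          (\<forall>m\<in>M. vect_mor G X z act X z act (lact M mul z e m))))"

definition right_inductive :: "('g, 'b) monoid_scheme \<Rightarrow> nat \<Rightarrow> bool" where
  "right_inductive G n \<longleftrightarrow>
    (\<forall>e\<in>In_mats G n. mat_mul G e e = e \<longrightarrow>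
      (let M = In_mats G n; mul = mat_mul G; z = zero_mat;
           X = P_set M mul z e;
           act = (\<lambda>g v. ract M mul z e (scalar_mat n g) v)
       in vect_obj G X z act \<and>
          (\<forall>m\<in>M. vect_mor G X z act X z act (ract M mul z e m))))"

end

theory Submission
  imports Defs
begin


locale absmon =
  fixes G :: "('g, 'b) monoid_scheme" (structure) and M :: "'m set" and mul :: "'m \<Rightarrow> 'm \<Rightarrow> 'm"
    and z :: 'm and one :: 'm and s :: "'g \<Rightarrow> 'm" and r :: "'m \<Rightarrow> nat"
  assumes grp: "comm_group G"
  and closed: "\<lbrakk>x\<in>M; y\<in>M\<rbrakk> \<Longrightarrow> mul x y \<in> M"
  and massoc: "\<lbrakk>x\<in>M; y\<in>M; w\<in>M\<rbrakk> \<Longrightarrow> mul (mul x y) w = mul x (mul y w)"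
  and z_in: "z \<in> M" and zl: "x\<in>M \<Longrightarrow> mul z x = z" and zr: "x\<in>M \<Longrightarrow> mul x z = z"
  and one_in: "one \<in> M" and onel: "x\<in>M \<Longrightarrow> mul one x = x" and oner: "x\<in>M \<Longrightarrow> mul x one = x"
  and s_in: "g \<in> carrier G \<Longrightarrow> s g \<in> M"
  and s_one: "s \<one>\<^bsub>G\<^esub> = one"
  and s_mult: "\<lbrakk>g\<in>carrier G; h\<in>carrier G\<rbrakk> \<Longrightarrow> s (g \<otimes>\<^bsub>G\<^esub> h) = mul (s g) (s h)"
  and s_comm: "\<lbrakk>g\<in>carrier G; x\<in>M\<rbrakk> \<Longrightarrow> mul (s g) x = mul x (s g)"
  and free: "\<lbrakk>g\<in>carrier G; x\<in>M; x\<noteq>z; mul (s g) x = x\<rbrakk> \<Longrightarrow> g = \<one>\<^bsub>G\<^esub>"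
  and finM: "finite M"
  and r_l: "\<lbrakk>x\<in>M; y\<in>M\<rbrakk> \<Longrightarrow> r (mul x y) \<le> r x"
  and r_r: "\<lbrakk>x\<in>M; y\<in>M\<rbrakk> \<Longrightarrow> r (mul x y) \<le> r y"
  and cancl: "\<lbrakk>m\<in>M; v1\<in>M; v2\<in>M; r (mul m v1) = r v1; r (mul m v2) = r v2;
               mul m v1 = mul m v2\<rbrakk> \<Longrightarrow> v1 = v2"
  and cancr: "\<lbrakk>m\<in>M; v1\<in>M; v2\<in>M; r (mul v1 m) = r v1; r (mul v2 m) = r v2;
               mul v1 m = mul v2 m\<rbrakk> \<Longrightarrow> v1 = v2"
begin

abbreviation "JJ \<equiv> J_ideal M mul"

lemma J_sub: "a\<in>M \<Longrightarrow> JJ a \<subseteq> M"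
  by (auto simp: J_ideal_def intro: closed)

lemma J_self: "a\<in>M \<Longrightarrow> a \<in> JJ a"
  unfolding J_ideal_def using onel oner one_in by force

lemma J_mono_l: "x\<in>M \<Longrightarrow> a\<in>M \<Longrightarrow> JJ (mul x a) \<subseteq> JJ a"
proof
  fix b assume x: "x\<in>M" "a\<in>M" and "b \<in> JJ (mul x a)"
  then obtain u w where b: "b = mul (mul u (mul x a)) w" "u\<in>M" "w\<in>M" by (auto simp: J_ideal_def)
  then have "b = mul (mul (mul u x) a) w" using x by (simp add: massoc)
  then show "b \<in> JJ a" using b x closed unfolding J_ideal_def by blast
qed

lemma J_mono_r: "y\<in>M \<Longrightarrow> a\<in>M \<Longrightarrow> JJ (mul a y) \<subseteq> JJ a"
proof
  fix b assume x: "y\<in>M" "a\<in>M" and "b \<in> JJ (mul a y)"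
  then obtain u w where b: "b = mul (mul u (mul a y)) w" "u\<in>M" "w\<in>M" by (auto simp: J_ideal_def)
  then have "b = mul (mul u a) (mul y w)" using x by (simp add: massoc closed)
  then show "b \<in> JJ a" using b x closed unfolding J_ideal_def by blast
qed

lemma J_trans: "a\<in>M \<Longrightarrow> b \<in> JJ a \<Longrightarrow> JJ b \<subseteq> JJ a"
proof -
  assume a: "a\<in>M" "b \<in> JJ a"
  then obtain x y where b: "b = mul (mul x a) y" "x\<in>M" "y\<in>M" by (auto simp: J_ideal_def)
  have "JJ b \<subseteq> JJ (mul x a)" using b a closed J_mono_r by auto
  also have "\<dots> \<subseteq> JJ a" using J_mono_l b a by auto
  finally show ?thesis .
qed

lemma D_char: "e\<in>M \<Longrightarrow> JJ e - I_ideal M mul e = {x\<in>M. JJ x = JJ e}"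
  unfolding I_ideal_def using J_sub J_self by blast

lemma inv_s: "g \<in> carrier G \<Longrightarrow> x\<in>M \<Longrightarrow> mul (s (inv\<^bsub>G\<^esub> g)) (mul (s g) x) = x"
proof -
  assume g: "g \<in> carrier G" and x: "x\<in>M"
  interpret comm_group G by (rule grp)
  have "mul (s (inv g)) (mul (s g) x) = mul (mul (s (inv g)) (s g)) x"
    using g x by (simp add: massoc s_in)
  also have "\<dots> = mul (s (inv g \<otimes> g)) x" by (simp only: s_mult[OF inv_closed[OF g] g])
  also have "\<dots> = x" using g x by (simp add: s_one onel)
  finally show ?thesis .
qed

lemma J_scal: "g \<in> carrier G \<Longrightarrow> x\<in>M \<Longrightarrow> JJ (mul (s g) x) = JJ x"
proof
  assume g: "g \<in> carrier G" and x: "x\<in>M"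
  show "JJ (mul (s g) x) \<subseteq> JJ x" using J_mono_l s_in g x by auto
  interpret comm_group G by (rule grp)
  have "JJ (mul (s (inv g)) (mul (s g) x)) \<subseteq> JJ (mul (s g) x)"
    using J_mono_l s_in g x closed by simp
  then show "JJ x \<subseteq> JJ (mul (s g) x)" using inv_s g x by simp
qed

lemma r_J: "a\<in>M \<Longrightarrow> b\<in>M \<Longrightarrow> JJ a \<subseteq> JJ b \<Longrightarrow> r a \<le> r b"
proof -
  assume ab: "a\<in>M" "b\<in>M" "JJ a \<subseteq> JJ b"
  then have "a \<in> JJ b" using J_self by blast
  then obtain x y where a: "a = mul (mul x b) y" "x\<in>M" "y\<in>M" by (auto simp: J_ideal_def)
  have "r a \<le> r (mul x b)" using a ab r_l closed by simp
  also have "\<dots> \<le> r b" using r_r a ab by simp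
  finally show ?thesis .
qed

lemma main:
  assumes e: "e \<in> M"
  shows "let X = P_set M mul z e; act = (\<lambda>g v. lact M mul z e (s g) v)
         in vect_obj G X z act \<and> (\<forall>m\<in>M. vect_mor G X z act X z act (lact M mul z e m))"
proof -
  interpret comm_group G by (rule grp)
  define D where "D = {x\<in>M. JJ x = JJ e}"
  have D_eq: "JJ e - I_ideal M mul e = D" using D_char e D_def by simp
  have DM: "D \<subseteq> M" unfolding D_def by auto
  define X where "X = D \<union> {z}"
  have X_eq: "P_set M mul z e = X" unfolding P_set_def X_def D_eq ..
  have XM: "X \<subseteq> M" using DM z_in X_def by auto
  have lact_eq: "\<And>m v. lact M mul z e m v = (if mul m v \<in> D then mul m v else z)"
    unfolding lact_def D_eq ..
  have Dscal: "\<And>g x. g \<in> carrier G \<Longrightarrow> x \<in> M \<Longrightarrow> mul (s g) x \<in> D \<longleftrightarrow> x \<in> D"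
    unfolding D_def using J_scal closed s_in by auto
  define act where "act = (\<lambda>g v. lact M mul z e (s g) v)"
  have act_z: "\<And>g. g \<in> carrier G \<Longrightarrow> act g z = z"
    unfolding act_def lact_eq using zr s_in by simp
  have act_D: "\<And>g v. g \<in> carrier G \<Longrightarrow> v \<in> D \<Longrightarrow> act g v = mul (s g) v"
    unfolding act_def lact_eq using Dscal DM by auto
  have act_D': "\<And>g v. g \<in> carrier G \<Longrightarrow> v \<in> D \<Longrightarrow> act g v \<in> D"
    using act_D Dscal DM by auto
  have f_in: "\<And>m v. lact M mul z e m v \<in> X" unfolding lact_eq X_def by auto
  have obj: "vect_obj G X z act"
    unfolding vect_obj_def
  proof (intro conjI ballI impI)
    show "finite X" using XM finM finite_subset by blast
    show "z \<in> X" unfolding X_def by simp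
    show "\<And>g v. g \<in> carrier G \<Longrightarrow> v \<in> X \<Longrightarrow> act g v \<in> X"
      unfolding act_def using f_in by simp
    show "\<And>v. v \<in> X \<Longrightarrow> act \<one> v = v"
      using act_D act_z DM onel s_one unfolding X_def by auto
    show "\<And>g h v. g \<in> carrier G \<Longrightarrow> h \<in> carrier G \<Longrightarrow> v \<in> X \<Longrightarrow> act (g \<otimes> h) v = act g (act h v)"
    proof -
      fix g h v assume gh: "g \<in> carrier G" "h \<in> carrier G" and v: "v \<in> X"
      show "act (g \<otimes> h) v = act g (act h v)"
      proof (cases "v = z")
        case True then show ?thesis using act_z gh by simp
      next
        case False
        then have vD: "v \<in> D" using v X_def by auto
        have "act (g \<otimes> h) v = mul (s (g \<otimes> h)) v" using act_D gh vD by simp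
        also have "\<dots> = mul (s g) (mul (s h) v)" using gh vD DM s_mult massoc s_in by auto
        also have "\<dots> = act g (act h v)" using act_D act_D' gh vD by simp
        finally show ?thesis .
      qed
    qed
    show "\<And>g. g \<in> carrier G \<Longrightarrow> act g z = z" by (rule act_z)
    show "\<And>g v. g \<in> carrier G \<Longrightarrow> v \<in> X - {z} \<Longrightarrow> act g v = v \<Longrightarrow> g = \<one>"
      using act_D free DM X_def by auto
  qed
  have mor: "vect_mor G X z act X z act (lact M mul z e m)" if m: "m \<in> M" for m
    unfolding vect_mor_def
  proof (intro conjI ballI impI)
    show "\<And>v. lact M mul z e m v \<in> X" by (rule f_in)
    show fz: "lact M mul z e m z = z" unfolding lact_eq using zr m by simp
    show "\<And>g v. g \<in> carrier G \<Longrightarrow> v \<in> X \<Longrightarrow>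
         lact M mul z e m (act g v) = act g (lact M mul z e m v)"
    proof -
      fix g v assume g: "g \<in> carrier G" and v: "v \<in> X"
      show "lact M mul z e m (act g v) = act g (lact M mul z e m v)"
      proof (cases "v = z")
        case True then show ?thesis using act_z g fz by simp
      next
        case False
        then have vD: "v \<in> D" using v X_def by auto
        have vM: "v \<in> M" using vD DM by auto
        have comm: "mul m (mul (s g) v) = mul (s g) (mul m v)"
          using m vM g s_in massoc s_comm by metis
        have mvM: "mul m v \<in> M" using closed m vM by simp
        show ?thesis
          using act_D[OF g vD] act_D[OF g] act_z[OF g] Dscal[OF g mvM] comm
          unfolding lact_eq by auto
      qed
    qed
    show "\<And>v1 v2. v1 \<in> X \<Longrightarrow> v2 \<in> X \<Longrightarrow>
        lact M mul z e m v1 = lact M mul z e m v2 \<and> lact M mul z e m v1 \<noteq> z \<Longrightarrow>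
        {act g v1 |g. g \<in> carrier G} = {act g v2 |g. g \<in> carrier G}"
    proof -
      fix v1 v2 assume v: "v1 \<in> X" "v2 \<in> X" and h: "lact M mul z e m v1 = lact M mul z e m v2 \<and> lact M mul z e m v1 \<noteq> z"
      have "v1 \<noteq> z" using h fz by auto
      then have v1D: "v1 \<in> D" using v X_def by auto
      have "v2 \<noteq> z" using h fz by auto
      then have v2D: "v2 \<in> D" using v X_def by auto
      have m1: "mul m v1 \<in> D" and m2: "mul m v2 \<in> D" and eq: "mul m v1 = mul m v2"
        using h unfolding lact_eq by (auto split: if_splits)
      have r1: "r (mul m v1) = r v1"
      proof -
        have "mul m v1 \<in> M" "v1 \<in> M" "JJ (mul m v1) = JJ v1" using m1 v1D unfolding D_def by auto
        then show ?thesis using r_J by (metis order_refl le_antisym)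
      qed
      have r2: "r (mul m v2) = r v2"
      proof -
        have "mul m v2 \<in> M" "v2 \<in> M" "JJ (mul m v2) = JJ v2" using m2 v2D unfolding D_def by auto
        then show ?thesis using r_J by (metis order_refl le_antisym)
      qed
      have "v1 = v2" using cancl[OF m _ _ r1 r2 eq] v1D v2D DM by auto
      then show "{act g v1 |g. g \<in> carrier G} = {act g v2 |g. g \<in> carrier G}" by simp
    qed
  qed
  show ?thesis unfolding Let_def X_eq act_def[symmetric] using obj mor by blast
qed

lemma flip: "absmon G M (\<lambda>x y. mul y x) z one s r"
proof -
  interpret comm_group G by (rule grp)
  show ?thesis
  proof (rule absmon.intro)
    show "comm_group G" by (rule grp)
    show "\<And>x y. x \<in> M \<Longrightarrow> y \<in> M \<Longrightarrow> mul y x \<in> M" by (rule closed)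
    show "\<And>x y w. x \<in> M \<Longrightarrow> y \<in> M \<Longrightarrow> w \<in> M \<Longrightarrow> mul w (mul y x) = mul (mul w y) x"
      by (rule massoc[symmetric])
    show "z \<in> M" by (rule z_in)
    show "\<And>x. x \<in> M \<Longrightarrow> mul x z = z" by (rule zr)
    show "\<And>x. x \<in> M \<Longrightarrow> mul z x = z" by (rule zl)
    show "one \<in> M" by (rule one_in)
    show "\<And>x. x \<in> M \<Longrightarrow> mul x one = x" by (rule oner)
    show "\<And>x. x \<in> M \<Longrightarrow> mul one x = x" by (rule onel)
    show "\<And>g. g \<in> carrier G \<Longrightarrow> s g \<in> M" by (rule s_in)
    show "s \<one> = one" by (rule s_one)
    show "\<And>g h. g \<in> carrier G \<Longrightarrow> h \<in> carrier G \<Longrightarrow> s (g \<otimes> h) = mul (s h) (s g)"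
      by (metis s_mult m_comm)
    show "\<And>g x. g \<in> carrier G \<Longrightarrow> x \<in> M \<Longrightarrow> mul x (s g) = mul (s g) x"
      by (rule s_comm[symmetric])
    show "\<And>g x. g \<in> carrier G \<Longrightarrow> x \<in> M \<Longrightarrow> x \<noteq> z \<Longrightarrow> mul x (s g) = x \<Longrightarrow> g = \<one>"
      by (metis free s_comm)
    show "finite M" by (rule finM)
    show "\<And>x y. x \<in> M \<Longrightarrow> y \<in> M \<Longrightarrow> r (mul y x) \<le> r x" by (rule r_r)
    show "\<And>x y. x \<in> M \<Longrightarrow> y \<in> M \<Longrightarrow> r (mul y x) \<le> r y" by (rule r_l)
    show "\<And>m v1 v2. m \<in> M \<Longrightarrow> v1 \<in> M \<Longrightarrow> v2 \<in> M \<Longrightarrow> r (mul v1 m) = r v1 \<Longrightarrow> r (mul v2 m) = r v2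
       \<Longrightarrow> mul v1 m = mul v2 m \<Longrightarrow> v1 = v2" by (rule cancr)
    show "\<And>m v1 v2. m \<in> M \<Longrightarrow> v1 \<in> M \<Longrightarrow> v2 \<in> M \<Longrightarrow> r (mul m v1) = r v1 \<Longrightarrow> r (mul m v2) = r v2
       \<Longrightarrow> mul m v1 = mul m v2 \<Longrightarrow> v1 = v2" by (rule cancl)
  qed
qed

lemma J_flip: "a \<in> M \<Longrightarrow> J_ideal M (\<lambda>x y. mul y x) a = JJ a"
  proof -
  assume a: "a \<in> M"
  have "J_ideal M (\<lambda>x y. mul y x) a = {mul y (mul a x) | x y. x \<in> M \<and> y \<in> M}"
    unfolding J_ideal_def by blast
  also have "\<dots> = {mul (mul y a) x | x y. x \<in> M \<and> y \<in> M}"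
    using a massoc by (intro Collect_cong) (metis (no_types, lifting))
  also have "\<dots> = JJ a" unfolding J_ideal_def by blast
  finally show ?thesis .
qed

lemma ract_flip: "e \<in> M \<Longrightarrow> ract M mul z e = lact M (\<lambda>x y. mul y x) z e"
proof -
  assume e: "e\<in>M"
  have I: "I_ideal M (\<lambda>x y. mul y x) e = I_ideal M mul e"
    unfolding I_ideal_def using J_flip e J_sub by (auto; metis J_flip subsetD)
  show ?thesis unfolding ract_def lact_def I J_flip[OF e] by simp
qed

lemma P_flip: "e \<in> M \<Longrightarrow> P_set M (\<lambda>x y. mul y x) z e = P_set M mul z e"
proof -
  assume e: "e\<in>M"
  have I: "I_ideal M (\<lambda>x y. mul y x) e = I_ideal M mul e"
    unfolding I_ideal_def using J_flip e J_sub by (auto; metis J_flip subsetD)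
  show ?thesis unfolding P_set_def I J_flip[OF e] ..
qed

lemma main_r:
  assumes e: "e \<in> M"
  shows "let X = P_set M mul z e; act = (\<lambda>g v. ract M mul z e (s g) v)
         in vect_obj G X z act \<and> (\<forall>m\<in>M. vect_mor G X z act X z act (ract M mul z e m))"
  using absmon.main[OF flip e] unfolding ract_flip[OF e] P_flip[OF e] .

end


definition supp :: "'g gmat \<Rightarrow> (nat \<times> nat) set" where
  "supp A = {(i,j). A i j \<noteq> None}"

definition rk :: "'g gmat \<Rightarrow> nat" where
  "rk A = card (supp A)"

lemma In_matsD:
  assumes "A \<in> In_mats G n"
  shows "A i j = Some a \<Longrightarrow> i < n \<and> j < n \<and> a \<in> carrier G"
    and "A i j \<noteq> None \<Longrightarrow> A i k \<noteq> None \<Longrightarrow> j = k"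
    and "A i j \<noteq> None \<Longrightarrow> A k j \<noteq> None \<Longrightarrow> i = k"
  using assms unfolding In_mats_def by force+

lemma supp_fin: "A \<in> In_mats G n \<Longrightarrow> finite (supp A)"
proof -
  assume A: "A \<in> In_mats G n"
  have "supp A \<subseteq> {..<n} \<times> {..<n}" unfolding supp_def using In_matsD(1)[OF A] by auto
  then show ?thesis using finite_subset by blast
qed

lemma mm_Some:
  assumes "A i k = Some a" "B k j = Some b" "\<And>k'. A i k' \<noteq> None \<Longrightarrow> B k' j \<noteq> None \<Longrightarrow> k' = k"
  shows "mat_mul G A B i j = Some (a \<otimes>\<^bsub>G\<^esub> b)"
proof -
  have ex: "\<exists>k. A i k \<noteq> None \<and> B k j \<noteq> None" using assms by auto
  have "(SOME k. A i k \<noteq> None \<and> B k j \<noteq> None) = k"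
    using assms by (intro some_equality) auto
  then show ?thesis unfolding mat_mul_def using ex assms by (simp add: Let_def)
qed

lemma mm_None:
  assumes "\<And>k. A i k = None \<or> B k j = None"
  shows "mat_mul G A B i j = None"
proof -
  have "\<not> (\<exists>k. A i k \<noteq> None \<and> B k j \<noteq> None)" using assms by metis
  then show ?thesis unfolding mat_mul_def by (simp only: if_not_P if_False)
qed

lemma mm_cases:
  assumes "mat_mul G A B i j \<noteq> None"
  obtains k a b where "A i k = Some a" "B k j = Some b"
  using assms unfolding mat_mul_def by (auto split: if_splits)

lemma mm_Some':
  assumes "A \<in> In_mats G n" "A i k = Some a" "B k j = Some b"
  shows "mat_mul G A B i j = Some (a \<otimes>\<^bsub>G\<^esub> b)"
  using assms In_matsD(2)[OF assms(1)] by (intro mm_Some) auto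

lemma mm_closed:
  assumes G: "monoid G" and A: "A \<in> In_mats G n" and B: "B \<in> In_mats G n"
  shows "mat_mul G A B \<in> In_mats G n"
proof -
  have 1: "i < n \<and> j < n \<and> the (mat_mul G A B i j) \<in> carrier G" if h: "mat_mul G A B i j \<noteq> None" for i j
  proof -
    obtain k a b where ab: "A i k = Some a" "B k j = Some b" using h by (rule mm_cases)
    then have "mat_mul G A B i j = Some (a \<otimes>\<^bsub>G\<^esub> b)" using mm_Some' A by metis
    then show ?thesis
      using In_matsD(1)[OF A ab(1)] In_matsD(1)[OF B ab(2)] monoid.m_closed[OF G] by auto
  qed
  have 2: "j = k" if h1: "mat_mul G A B i j \<noteq> None" and h2: "mat_mul G A B i k \<noteq> None" for i j k
  proof -
    obtain k1 a b where 1: "A i k1 = Some a" "B k1 j = Some b" using h1 by (rule mm_cases)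
    obtain k2 a' b' where 2: "A i k2 = Some a'" "B k2 k = Some b'" using h2 by (rule mm_cases)
    have "k1 = k2" using In_matsD(2)[OF A] 1 2 by auto
    then show "j = k" using In_matsD(2)[OF B] 1 2 by auto
  qed
  have 3: "i = k" if h1: "mat_mul G A B i j \<noteq> None" and h2: "mat_mul G A B k j \<noteq> None" for i j k
  proof -
    obtain k1 a b where 1: "A i k1 = Some a" "B k1 j = Some b" using h1 by (rule mm_cases)
    obtain k2 a' b' where 2: "A k k2 = Some a'" "B k2 j = Some b'" using h2 by (rule mm_cases)
    have "k1 = k2" using In_matsD(3)[OF B] 1 2 by auto
    then show "i = k" using In_matsD(3)[OF A] 1 2 by auto
  qed
  show ?thesis unfolding In_mats_def using 1 2 3 by blast
qed

lemma mm_assoc: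
  assumes G: "monoid G" and A: "A \<in> In_mats G n" and B: "B \<in> In_mats G n" and C: "C \<in> In_mats G n"
  shows "mat_mul G (mat_mul G A B) C = mat_mul G A (mat_mul G B C)"
proof (intro ext)
  fix i j
  have AB: "mat_mul G A B \<in> In_mats G n" using mm_closed G A B .
  show "mat_mul G (mat_mul G A B) C i j = mat_mul G A (mat_mul G B C) i j"
  proof (cases "\<exists>k l. A i k \<noteq> None \<and> B k l \<noteq> None \<and> C l j \<noteq> None")
    case True
    then obtain k l a b c where abc: "A i k = Some a" "B k l = Some b" "C l j = Some c" by auto
    have "mat_mul G A B i l = Some (a \<otimes>\<^bsub>G\<^esub> b)" using mm_Some' A abc by metis
    then have 1: "mat_mul G (mat_mul G A B) C i j = Some ((a \<otimes>\<^bsub>G\<^esub> b) \<otimes>\<^bsub>G\<^esub> c)"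
      using mm_Some' AB abc by metis
    have "mat_mul G B C k j = Some (b \<otimes>\<^bsub>G\<^esub> c)" using mm_Some' B abc by metis
    then have 2: "mat_mul G A (mat_mul G B C) i j = Some (a \<otimes>\<^bsub>G\<^esub> (b \<otimes>\<^bsub>G\<^esub> c))"
      using mm_Some' A abc by metis
    have "a \<in> carrier G" "b \<in> carrier G" "c \<in> carrier G"
      using In_matsD(1)[OF A abc(1)] In_matsD(1)[OF B abc(2)] In_matsD(1)[OF C abc(3)] by auto
    then show ?thesis using 1 2 monoid.m_assoc[OF G] by simp
  next
    case False
    have 1: "mat_mul G (mat_mul G A B) C i j = None"
    proof (rule mm_None)
      fix l
      show "mat_mul G A B i l = None \<or> C l j = None"
      proof (rule ccontr)
        assume "\<not> ?thesis"
        then have "mat_mul G A B i l \<noteq> None" "C l j \<noteq> None" by auto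
        then obtain k a b where kk: "A i k = Some a" "B k l = Some b" by (metis mm_cases)
        then show False using False \<open>C l j \<noteq> None\<close> by (metis option.distinct(1))
      qed
    qed
    have 2: "mat_mul G A (mat_mul G B C) i j = None"
    proof (rule mm_None)
      fix k
      show "A i k = None \<or> mat_mul G B C k j = None"
      proof (rule ccontr)
        assume "\<not> ?thesis"
        then have "A i k \<noteq> None" "mat_mul G B C k j \<noteq> None" by auto
        then obtain l b c where ll: "B k l = Some b" "C l j = Some c" by (metis mm_cases)
        then show False using False \<open>A i k \<noteq> None\<close> by (metis option.distinct(1))
      qed
    qed
    show ?thesis using 1 2 by simp
  qed
qed

lemma s_left:
  assumes A: "A \<in> In_mats G n"
  shows "mat_mul G (scalar_mat n g) A = (\<lambda>i j. map_option (\<lambda>a. g \<otimes>\<^bsub>G\<^esub> a) (A i j))"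
proof (intro ext)
  fix i j
  show "mat_mul G (scalar_mat n g) A i j = map_option (\<lambda>a. g \<otimes>\<^bsub>G\<^esub> a) (A i j)"
  proof (cases "A i j")
    case None
    have "mat_mul G (scalar_mat n g) A i j = None"
      by (rule mm_None) (use None in \<open>auto simp: scalar_mat_def\<close>)
    then show ?thesis using None by simp
  next
    case (Some a)
    then have "i < n" using In_matsD(1)[OF A] by blast
    then have "mat_mul G (scalar_mat n g) A i j = Some (g \<otimes>\<^bsub>G\<^esub> a)"
      using Some by (intro mm_Some) (auto simp: scalar_mat_def split: if_splits)
    then show ?thesis using Some by simp
  qed
qed

lemma s_right:
  assumes A: "A \<in> In_mats G n"
  shows "mat_mul G A (scalar_mat n g) = (\<lambda>i j. map_option (\<lambda>a. a \<otimes>\<^bsub>G\<^esub> g) (A i j))"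
proof (intro ext)
  fix i j
  show "mat_mul G A (scalar_mat n g) i j = map_option (\<lambda>a. a \<otimes>\<^bsub>G\<^esub> g) (A i j)"
  proof (cases "A i j")
    case None
    have "mat_mul G A (scalar_mat n g) i j = None"
      by (rule mm_None) (use None in \<open>auto simp: scalar_mat_def\<close>)
    then show ?thesis using None by simp
  next
    case (Some a)
    then have "j < n" using In_matsD(1)[OF A] by blast
    then have "mat_mul G A (scalar_mat n g) i j = Some (a \<otimes>\<^bsub>G\<^esub> g)"
      using Some by (intro mm_Some) (auto simp: scalar_mat_def split: if_splits)
    then show ?thesis using Some by simp
  qed
qed

lemma s_in: "g \<in> carrier G \<Longrightarrow> scalar_mat n g \<in> In_mats G n"
  unfolding In_mats_def scalar_mat_def by (auto split: if_splits)

lemma zero_in: "zero_mat \<in> In_mats G n"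
  unfolding In_mats_def zero_mat_def by auto

lemma fin_In:
  assumes "finite (carrier G)"
  shows "finite (In_mats G n)"
proof -
  define f where "f = (\<lambda>A::'a gmat. restrict (\<lambda>p. A (fst p) (snd p)) ({..<n} \<times> {..<n}))"
  have "f ` In_mats G n \<subseteq> PiE ({..<n} \<times> {..<n}) (\<lambda>_. insert None (Some ` carrier G))"
  proof
    fix x assume "x \<in> f ` In_mats G n"
    then obtain A where A: "A \<in> In_mats G n" "x = f A" by auto
    show "x \<in> PiE ({..<n} \<times> {..<n}) (\<lambda>_. insert None (Some ` carrier G))"
      unfolding A f_def
    proof (intro restrict_PiE_iff[THEN iffD2] ballI)
      fix p assume "p \<in> {..<n} \<times> {..<n}"
      show "A (fst p) (snd p) \<in> insert None (Some ` carrier G)"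
        using In_matsD(1)[OF A(1), of "fst p" "snd p"] by (cases "A (fst p) (snd p)") auto
    qed
  qed
  moreover have "finite (PiE ({..<n} \<times> {..<n}) (\<lambda>_. insert None (Some ` carrier G)))"
    using assms by (intro finite_PiE) auto
  ultimately have "finite (f ` In_mats G n)" by (rule finite_subset)
  moreover have "inj_on f (In_mats G n)"
  proof (rule inj_onI)
    fix A B assume A: "A \<in> In_mats G n" and B: "B \<in> In_mats G n" and eq: "f A = f B"
    show "A = B"
    proof (intro ext)
      fix i j
      show "A i j = B i j"
      proof (cases "i < n \<and> j < n")
        case True
        then have "f A (i,j) = f B (i,j)" using eq by simp
        then show ?thesis using True unfolding f_def by simp
      next
        case False
        then have "A i j = None" "B i j = None" using In_matsD(1)[OF A] In_matsD(1)[OF B]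
          by (metis option.exhaust)+
        then show ?thesis by simp
      qed
    qed
  qed
  ultimately show ?thesis using finite_imageD by blast
qed



lemma phiL:
  assumes A: "A \<in> In_mats G n" and B: "B \<in> In_mats G n"
  defines "\<phi> \<equiv> (\<lambda>(i,j). (SOME k. A i k \<noteq> None, j))"
  shows "inj_on \<phi> (supp (mat_mul G A B))" and "\<phi> ` supp (mat_mul G A B) \<subseteq> supp B"
    and "\<And>i j. (i,j) \<in> supp (mat_mul G A B) \<Longrightarrow> A i (fst (\<phi> (i,j))) \<noteq> None"
proof -
  have key: "\<exists>k. fst (\<phi> (i,j)) = k \<and> snd (\<phi> (i,j)) = j \<and> A i k \<noteq> None \<and> B k j \<noteq> None"
    if "(i,j) \<in> supp (mat_mul G A B)" for i j
  proof -
    have "mat_mul G A B i j \<noteq> None" using that unfolding supp_def by simp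
    then obtain k a b where ab: "A i k = Some a" "B k j = Some b" by (rule mm_cases)
    have "(SOME k. A i k \<noteq> None) = k"
      using ab In_matsD(2)[OF A] by (intro some_equality) auto
    then show ?thesis using ab unfolding \<phi>_def by auto
  qed
  show "inj_on \<phi> (supp (mat_mul G A B))"
  proof (rule inj_onI)
    fix p q assume p: "p \<in> supp (mat_mul G A B)" and q: "q \<in> supp (mat_mul G A B)" and eq: "\<phi> p = \<phi> q"
    obtain i j where pij: "p = (i,j)" by fastforce
    obtain i' j' where qij: "q = (i',j')" by fastforce
    obtain k where k: "fst (\<phi> (i,j)) = k" "snd (\<phi> (i,j)) = j" "A i k \<noteq> None"
      using key p pij by blast
    obtain k' where k': "fst (\<phi> (i',j')) = k'" "snd (\<phi> (i',j')) = j'" "A i' k' \<noteq> None"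
      using key q qij by blast
    have "j = j'" "k = k'" using k k' eq pij qij by auto
    then have "i = i'" using In_matsD(3)[OF A] k k' by auto
    then show "p = q" using pij qij \<open>j = j'\<close> by simp
  qed
  show "\<phi> ` supp (mat_mul G A B) \<subseteq> supp B"
  proof
    fix x assume "x \<in> \<phi> ` supp (mat_mul G A B)"
    then obtain i j where ij: "(i,j) \<in> supp (mat_mul G A B)" "x = \<phi> (i,j)" by auto
    then obtain k where "fst x = k" "snd x = j" "B k j \<noteq> None" using key by blast
    then show "x \<in> supp B" unfolding supp_def by (cases x) auto
  qed
  show "\<And>i j. (i,j) \<in> supp (mat_mul G A B) \<Longrightarrow> A i (fst (\<phi> (i,j))) \<noteq> None"
    using key by blast
qed

lemma phiR:
  assumes A: "A \<in> In_mats G n" and B: "B \<in> In_mats G n"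
  defines "\<phi> \<equiv> (\<lambda>(i,j). (i, SOME k. B k j \<noteq> None))"
  shows "inj_on \<phi> (supp (mat_mul G A B))" and "\<phi> ` supp (mat_mul G A B) \<subseteq> supp A"
    and "\<And>i j. (i,j) \<in> supp (mat_mul G A B) \<Longrightarrow> B (snd (\<phi> (i,j))) j \<noteq> None"
proof -
  have key: "\<exists>k. snd (\<phi> (i,j)) = k \<and> fst (\<phi> (i,j)) = i \<and> A i k \<noteq> None \<and> B k j \<noteq> None"
    if "(i,j) \<in> supp (mat_mul G A B)" for i j
  proof -
    have "mat_mul G A B i j \<noteq> None" using that unfolding supp_def by simp
    then obtain k a b where ab: "A i k = Some a" "B k j = Some b" by (rule mm_cases)
    have "(SOME k. B k j \<noteq> None) = k"
      using ab In_matsD(3)[OF B] by (intro some_equality) auto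
    then show ?thesis using ab unfolding \<phi>_def by auto
  qed
  show "inj_on \<phi> (supp (mat_mul G A B))"
  proof (rule inj_onI)
    fix p q assume p: "p \<in> supp (mat_mul G A B)" and q: "q \<in> supp (mat_mul G A B)" and eq: "\<phi> p = \<phi> q"
    obtain i j where pij: "p = (i,j)" by fastforce
    obtain i' j' where qij: "q = (i',j')" by fastforce
    obtain k where k: "snd (\<phi> (i,j)) = k" "fst (\<phi> (i,j)) = i" "B k j \<noteq> None"
      using key p pij by blast
    obtain k' where k': "snd (\<phi> (i',j')) = k'" "fst (\<phi> (i',j')) = i'" "B k' j' \<noteq> None"
      using key q qij by blast
    have "i = i'" "k = k'" using k k' eq pij qij by auto
    then have "j = j'" using In_matsD(2)[OF B] k k' by auto
    then show "p = q" using pij qij \<open>i = i'\<close> by simp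
  qed
  show "\<phi> ` supp (mat_mul G A B) \<subseteq> supp A"
  proof
    fix x assume "x \<in> \<phi> ` supp (mat_mul G A B)"
    then obtain i j where ij: "(i,j) \<in> supp (mat_mul G A B)" "x = \<phi> (i,j)" by auto
    then obtain k where "snd x = k" "fst x = i" "A i k \<noteq> None" using key by blast
    then show "x \<in> supp A" unfolding supp_def by (cases x) auto
  qed
  show "\<And>i j. (i,j) \<in> supp (mat_mul G A B) \<Longrightarrow> B (snd (\<phi> (i,j))) j \<noteq> None"
    using key by blast
qed

lemma rk_l: "A \<in> In_mats G n \<Longrightarrow> B \<in> In_mats G n \<Longrightarrow> rk (mat_mul G A B) \<le> rk A"
  unfolding rk_def using phiR card_inj_on_le supp_fin by metis

lemma rk_r: "A \<in> In_mats G n \<Longrightarrow> B \<in> In_mats G n \<Longrightarrow> rk (mat_mul G A B) \<le> rk B"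
  unfolding rk_def using phiL card_inj_on_le supp_fin by metis

lemma img_full:
  assumes "finite T" "inj_on f S" "f ` S \<subseteq> T" "card S = card T"
  shows "f ` S = T"
  using assms card_image card_subset_eq by metis

lemma cover_l:
  assumes A: "A \<in> In_mats G n" and B: "B \<in> In_mats G n" and r: "rk (mat_mul G A B) = rk B"
    and k: "B k j \<noteq> None"
  shows "\<exists>i. A i k \<noteq> None"
proof -
  define \<phi> where "\<phi> = (\<lambda>(i::nat,j::nat). (SOME k. A i k \<noteq> None, j))"
  have "\<phi> ` supp (mat_mul G A B) = supp B"
    using img_full[OF supp_fin[OF B] phiL(1)[OF A B] phiL(2)[OF A B]] r unfolding rk_def \<phi>_def by simp
  moreover have "(k,j) \<in> supp B" using k unfolding supp_def by simp
  ultimately obtain i j' where "(i,j') \<in> supp (mat_mul G A B)" "\<phi> (i,j') = (k,j)" by force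
  then show ?thesis using phiL(3)[OF A B] unfolding \<phi>_def by (metis fst_conv)
qed

lemma cover_r:
  assumes A: "A \<in> In_mats G n" and B: "B \<in> In_mats G n" and r: "rk (mat_mul G A B) = rk A"
    and k: "A i k \<noteq> None"
  shows "\<exists>j. B k j \<noteq> None"
proof -
  define \<phi> where "\<phi> = (\<lambda>(i::nat,j::nat). (i, SOME k. B k j \<noteq> None))"
  have "\<phi> ` supp (mat_mul G A B) = supp A"
    using img_full[OF supp_fin[OF A] phiR(1)[OF A B] phiR(2)[OF A B]] r unfolding rk_def \<phi>_def by simp
  moreover have "(i,k) \<in> supp A" using k unfolding supp_def by simp
  ultimately obtain i' j where "(i',j) \<in> supp (mat_mul G A B)" "\<phi> (i',j) = (i,k)" by force
  then show ?thesis using phiR(3)[OF A B] unfolding \<phi>_def by (metis snd_conv)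
qed

lemma cancl_aux:
  assumes G: "group G" and m: "m \<in> In_mats G n" and v1: "v1 \<in> In_mats G n" and v2: "v2 \<in> In_mats G n"
    and eq: "mat_mul G m v1 = mat_mul G m v2" and a: "v1 k j = Some a" and c: "m i k = Some c"
  shows "v2 k j = Some a"
proof -
  have "mat_mul G m v1 i j = Some (c \<otimes>\<^bsub>G\<^esub> a)" using m c a by (rule mm_Some')
  then have h: "mat_mul G m v2 i j = Some (c \<otimes>\<^bsub>G\<^esub> a)" using eq by simp
  then obtain k' d b where db: "m i k' = Some d" "v2 k' j = Some b" by (metis mm_cases option.distinct(1))
  have "k' = k" using In_matsD(2)[OF m] db c by auto
  then have "d = c" using db c by simp
  have "mat_mul G m v2 i j = Some (d \<otimes>\<^bsub>G\<^esub> b)" using m db by (rule mm_Some')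
  then have "c \<otimes>\<^bsub>G\<^esub> a = c \<otimes>\<^bsub>G\<^esub> b" using h \<open>d = c\<close> by simp
  moreover have "a \<in> carrier G" "b \<in> carrier G" "c \<in> carrier G"
    using In_matsD(1)[OF v1 a] In_matsD(1)[OF v2 db(2)] In_matsD(1)[OF m c] by auto
  ultimately have "a = b" using G by (metis group.Units_eq group.is_monoid monoid.Units_l_cancel)
  then show ?thesis using db \<open>k' = k\<close> by simp
qed

lemma cancr_aux:
  assumes G: "group G" and m: "m \<in> In_mats G n" and v1: "v1 \<in> In_mats G n" and v2: "v2 \<in> In_mats G n"
    and eq: "mat_mul G v1 m = mat_mul G v2 m" and a: "v1 i k = Some a" and c: "m k j = Some c"
  shows "v2 i k = Some a"
proof -
  have "mat_mul G v1 m i j = Some (a \<otimes>\<^bsub>G\<^esub> c)" using v1 a c by (rule mm_Some')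
  then have h: "mat_mul G v2 m i j = Some (a \<otimes>\<^bsub>G\<^esub> c)" using eq by simp
  then obtain k' d b where db: "v2 i k' = Some b" "m k' j = Some d" by (metis mm_cases option.distinct(1))
  have "k' = k" using In_matsD(3)[OF m] db c by auto
  then have "d = c" using db c by simp
  have "mat_mul G v2 m i j = Some (b \<otimes>\<^bsub>G\<^esub> d)" using v2 db by (rule mm_Some')
  then have "a \<otimes>\<^bsub>G\<^esub> c = b \<otimes>\<^bsub>G\<^esub> c" using h \<open>d = c\<close> by simp
  moreover have "a \<in> carrier G" "b \<in> carrier G" "c \<in> carrier G"
    using In_matsD(1)[OF v1 a] In_matsD(1)[OF v2 db(1)] In_matsD(1)[OF m c] by auto
  ultimately have "a = b" using G by (metis group.right_cancel)
  then show ?thesis using db \<open>k' = k\<close> by simp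
qed

lemma cancl:
  assumes G: "group G" and m: "m \<in> In_mats G n" and v1: "v1 \<in> In_mats G n" and v2: "v2 \<in> In_mats G n"
    and r1: "rk (mat_mul G m v1) = rk v1" and r2: "rk (mat_mul G m v2) = rk v2"
    and eq: "mat_mul G m v1 = mat_mul G m v2"
  shows "v1 = v2"
proof (intro ext)
  fix k j
  show "v1 k j = v2 k j"
  proof (cases "v1 k j")
    case None
    show ?thesis
    proof (cases "v2 k j")
      case (Some b)
      then obtain i c where "m i k = Some c" using cover_l[OF m v2 r2] by blast
      then show ?thesis using cancl_aux[OF G m v2 v1 eq[symmetric] Some] None by (metis option.distinct(1))
    qed (use None in simp)
  next
    case (Some a)
    then obtain i c where "m i k = Some c" using cover_l[OF m v1 r1] by blast
    then show ?thesis using cancl_aux[OF G m v1 v2 eq Some] Some by simp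
  qed
qed

lemma cancr:
  assumes G: "group G" and m: "m \<in> In_mats G n" and v1: "v1 \<in> In_mats G n" and v2: "v2 \<in> In_mats G n"
    and r1: "rk (mat_mul G v1 m) = rk v1" and r2: "rk (mat_mul G v2 m) = rk v2"
    and eq: "mat_mul G v1 m = mat_mul G v2 m"
  shows "v1 = v2"
proof (intro ext)
  fix i k
  show "v1 i k = v2 i k"
  proof (cases "v1 i k")
    case None
    show ?thesis
    proof (cases "v2 i k")
      case (Some b)
      then obtain j c where "m k j = Some c" using cover_r[OF v2 m r2] by blast
      then show ?thesis using cancr_aux[OF G m v2 v1 eq[symmetric] Some] None by (metis option.distinct(1))
    qed (use None in simp)
  next
    case (Some a)
    then obtain j c where "m k j = Some c" using cover_r[OF v1 m r1] by blast
    then show ?thesis using cancr_aux[OF G m v1 v2 eq Some] Some by simp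
  qed
qed



lemma In_absmon:
  fixes G :: "('a, 'b) monoid_scheme" (structure)
  assumes cg: "comm_group G" and fin: "finite (carrier G)"
  shows "absmon G (In_mats G n) (mat_mul G) zero_mat (scalar_mat n \<one>\<^bsub>G\<^esub>) (scalar_mat n) rk"
proof -
  interpret comm_group G by (rule cg)
  have gr: "group G" by unfold_locales
  have mo: "monoid G" by unfold_locales
  have zl: "mat_mul G zero_mat x = zero_mat" for x :: "'a gmat"
  proof -
    have "mat_mul G zero_mat x i j = None" for i j by (rule mm_None) (simp add: zero_mat_def)
    then show ?thesis by (intro ext) (simp add: zero_mat_def)
  qed
  have zr: "mat_mul G x zero_mat = zero_mat" for x :: "'a gmat"
  proof -
    have "mat_mul G x zero_mat i j = None" for i j by (rule mm_None) (simp add: zero_mat_def)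
    then show ?thesis by (intro ext) (simp add: zero_mat_def)
  qed
  have sl: "mat_mul G (scalar_mat n g) x = (\<lambda>i j. map_option (\<lambda>a. g \<otimes> a) (x i j))"
    if "x \<in> In_mats G n" for g x using s_left that .
  have sr: "mat_mul G x (scalar_mat n g) = (\<lambda>i j. map_option (\<lambda>a. a \<otimes> g) (x i j))"
    if "x \<in> In_mats G n" for g x using s_right that .
  show ?thesis
  proof (rule absmon.intro)
    show "comm_group G" by (rule cg)
    show "\<And>x y. x \<in> In_mats G n \<Longrightarrow> y \<in> In_mats G n \<Longrightarrow> mat_mul G x y \<in> In_mats G n"
      using mm_closed[OF mo] by blast
    show "\<And>x y w. x \<in> In_mats G n \<Longrightarrow> y \<in> In_mats G n \<Longrightarrow> w \<in> In_mats G n \<Longrightarrow>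
      mat_mul G (mat_mul G x y) w = mat_mul G x (mat_mul G y w)"
      using mm_assoc[OF mo] by blast
    show "zero_mat \<in> In_mats G n" by (rule zero_in)
    show "\<And>x. x \<in> In_mats G n \<Longrightarrow> mat_mul G zero_mat x = zero_mat" using zl by blast
    show "\<And>x. x \<in> In_mats G n \<Longrightarrow> mat_mul G x zero_mat = zero_mat" using zr by blast
    show "scalar_mat n \<one> \<in> In_mats G n" by (rule s_in) simp
    show "\<And>x. x \<in> In_mats G n \<Longrightarrow> mat_mul G (scalar_mat n \<one>) x = x"
    proof -
      fix x assume x: "x \<in> In_mats G n"
      show "mat_mul G (scalar_mat n \<one>) x = x"
      proof (intro ext)
        fix i j show "mat_mul G (scalar_mat n \<one>) x i j = x i j"
          using sl[OF x] In_matsD(1)[OF x, of i j] by (cases "x i j") auto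
      qed
    qed
    show "\<And>x. x \<in> In_mats G n \<Longrightarrow> mat_mul G x (scalar_mat n \<one>) = x"
    proof -
      fix x assume x: "x \<in> In_mats G n"
      show "mat_mul G x (scalar_mat n \<one>) = x"
      proof (intro ext)
        fix i j show "mat_mul G x (scalar_mat n \<one>) i j = x i j"
          using sr[OF x] In_matsD(1)[OF x, of i j] by (cases "x i j") auto
      qed
    qed
    show "\<And>g. g \<in> carrier G \<Longrightarrow> scalar_mat n g \<in> In_mats G n" by (rule s_in)
    show "scalar_mat n \<one> = scalar_mat n \<one>" ..
    show "\<And>g h. g \<in> carrier G \<Longrightarrow> h \<in> carrier G \<Longrightarrow>
       scalar_mat n (g \<otimes> h) = mat_mul G (scalar_mat n g) (scalar_mat n h)"
    proof -
      fix g h assume g: "g \<in> carrier G" and h: "h \<in> carrier G"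
      show "scalar_mat n (g \<otimes> h) = mat_mul G (scalar_mat n g) (scalar_mat n h)"
        unfolding sl[OF s_in[OF h]] by (intro ext) (simp add: scalar_mat_def)
    qed
    show "\<And>g x. g \<in> carrier G \<Longrightarrow> x \<in> In_mats G n \<Longrightarrow>
       mat_mul G (scalar_mat n g) x = mat_mul G x (scalar_mat n g)"
    proof -
      fix g x assume g: "g \<in> carrier G" and x: "x \<in> In_mats G n"
      show "mat_mul G (scalar_mat n g) x = mat_mul G x (scalar_mat n g)"
        unfolding sl[OF x] sr[OF x]
      proof (intro ext)
        fix i j show "map_option ((\<otimes>) g) (x i j) = map_option (\<lambda>a. a \<otimes> g) (x i j)"
          using In_matsD(1)[OF x, of i j] g m_comm by (cases "x i j") auto
      qed
    qed
    show "\<And>g x. g \<in> carrier G \<Longrightarrow> x \<in> In_mats G n \<Longrightarrow> x \<noteq> zero_mat \<Longrightarrow>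
       mat_mul G (scalar_mat n g) x = x \<Longrightarrow> g = \<one>"
    proof -
      fix g x assume g: "g \<in> carrier G" and x: "x \<in> In_mats G n" and nz: "x \<noteq> zero_mat"
        and eq: "mat_mul G (scalar_mat n g) x = x"
      obtain i j a where a: "x i j = Some a"
        using nz unfolding zero_mat_def by (metis ext not_None_eq)
      have "map_option ((\<otimes>) g) (x i j) = x i j" using eq sl[OF x] by metis
      then have "g \<otimes> a = a" using a by simp
      then show "g = \<one>" using g In_matsD(1)[OF x a] by simp
    qed
    show "finite (In_mats G n)" using fin_In fin by blast
    show "\<And>x y. x \<in> In_mats G n \<Longrightarrow> y \<in> In_mats G n \<Longrightarrow> rk (mat_mul G x y) \<le> rk x" by (rule rk_l)
    show "\<And>x y. x \<in> In_mats G n \<Longrightarrow> y \<in> In_mats G n \<Longrightarrow> rk (mat_mul G x y) \<le> rk y" by (rule rk_r)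
    show "\<And>m v1 v2. m \<in> In_mats G n \<Longrightarrow> v1 \<in> In_mats G n \<Longrightarrow> v2 \<in> In_mats G n \<Longrightarrow>
       rk (mat_mul G m v1) = rk v1 \<Longrightarrow> rk (mat_mul G m v2) = rk v2 \<Longrightarrow>
       mat_mul G m v1 = mat_mul G m v2 \<Longrightarrow> v1 = v2" using cancl[OF gr] by blast
    show "\<And>m v1 v2. m \<in> In_mats G n \<Longrightarrow> v1 \<in> In_mats G n \<Longrightarrow> v2 \<in> In_mats G n \<Longrightarrow>
       rk (mat_mul G v1 m) = rk v1 \<Longrightarrow> rk (mat_mul G v2 m) = rk v2 \<Longrightarrow>
       mat_mul G v1 m = mat_mul G v2 m \<Longrightarrow> v1 = v2" using cancr[OF gr] by blast
  qed
qed

theorem mainTheorem10: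
  fixes G :: "('g, 'b) monoid_scheme" and n :: nat
  assumes "comm_group G" and "finite (carrier G)" and "n \<ge> 1"
  shows "left_inductive G n \<and> right_inductive G n"
proof -
  have A: "absmon G (In_mats G n) (mat_mul G) zero_mat (scalar_mat n \<one>\<^bsub>G\<^esub>) (scalar_mat n) rk"
    using In_absmon assms by blast
  show ?thesis
    unfolding left_inductive_def right_inductive_def
    using absmon.main[OF A] absmon.main_r[OF A] by (simp add: Let_def)
qed


end
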